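(* Let $G$ be a group of nilpotency class two, minimally generated by elements $x_1,\ldots,x_m$ of orders $1<2^{r_1}\leq 2^{r_2}\leq\cdots\leq 2^{r_m}$, respectively, and assume that $m>1$ and $r_m=r_{m-1}+1$. If $G$ is capable, then for some $i\in\{1,\ldots,m-1\}$ the commutator $[x_m,x_i]$ has order exactly $2^{r_{m-1}}$.
   Context: A group $G$ is called capable if there exists a group $K$ such that $K/Z(K)\cong G$. Commutators are $[x,y]=x^{-1}y^{-1}xy$. *)

theory Defs
  imports "HOL-Algebra.Algebra"
begin

definition center :: "('a, 'b) monoid_scheme \<Rightarrow> 'a set" where
  "center G = {z \<in> carrier G. \<forall>g \<in> carrier G. z \<otimes>\<^bsub>G\<^esub> g = g \<otimes>\<^bsub>G\<^esub> z}"

definition commutator :: "('a, 'b) monoid_scheme \<Rightarrow> 'a \<Rightarrow> 'a \<Rightarrow> 'a" where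
  "commutator G x y = inv\<^bsub>G\<^esub> x \<otimes>\<^bsub>G\<^esub> inv\<^bsub>G\<^esub> y \<otimes>\<^bsub>G\<^esub> x \<otimes>\<^bsub>G\<^esub> y"

definition nilpotent_class_two :: "('a, 'b) monoid_scheme \<Rightarrow> bool" where
  "nilpotent_class_two G \<longleftrightarrow> derived G (carrier G) \<subseteq> center G \<and> \<not> comm_group G"

definition capable_witness :: "('c, 'd) monoid_scheme \<Rightarrow> ('a, 'b) monoid_scheme \<Rightarrow> bool" where
  "capable_witness K G \<longleftrightarrow> group K \<and> (K Mod center K) \<cong> G"

end

theory Submission
  imports Defs "HOL-Computational_Algebra.Primes"
begin

context group begin

lemma inv_cancel_l[simp]: "x \<in> carrier G \<Longrightarrow> y \<in> carrier G \<Longrightarrow> x \<otimes> (inv x \<otimes> y) = y"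
  by (simp add: m_assoc[symmetric])
lemma inv_cancel_l2[simp]: "x \<in> carrier G \<Longrightarrow> y \<in> carrier G \<Longrightarrow> inv x \<otimes> (x \<otimes> y) = y"
  by (simp add: m_assoc[symmetric])

lemma comm_closed[simp]: "u \<in> carrier G \<Longrightarrow> v \<in> carrier G \<Longrightarrow> commutator G u v \<in> carrier G"
  by (simp add: commutator_def)

lemma comm_swap: "u \<in> carrier G \<Longrightarrow> v \<in> carrier G \<Longrightarrow> u \<otimes> v = v \<otimes> u \<otimes> commutator G u v"
  by (simp add: commutator_def m_assoc[symmetric]) (simp add: m_assoc)

lemma comm_one_iff: "u \<in> carrier G \<Longrightarrow> v \<in> carrier G \<Longrightarrow> commutator G u v = \<one> \<longleftrightarrow> u \<otimes> v = v \<otimes> u"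
proof
  assume u: "u \<in> carrier G" and v: "v \<in> carrier G"
  { assume "commutator G u v = \<one>" then show "u \<otimes> v = v \<otimes> u" using comm_swap[OF u v] u v by simp }
  { assume h: "u \<otimes> v = v \<otimes> u"
    have "commutator G u v = inv u \<otimes> inv v \<otimes> (u \<otimes> v)" using u v by (simp add: commutator_def m_assoc)
    also have "\<dots> = inv u \<otimes> inv v \<otimes> (v \<otimes> u)" using h by simp
    also have "\<dots> = \<one>" using u v by (simp add: m_assoc[symmetric]) (simp add: m_assoc)
    finally show "commutator G u v = \<one>" . }
qed

lemma comm_inv: "u \<in> carrier G \<Longrightarrow> v \<in> carrier G \<Longrightarrow> inv (commutator G u v) = commutator G v u"
  by (simp add: commutator_def inv_mult_group m_assoc)

lemma comm_mult_left: "x \<in> carrier G \<Longrightarrow> y \<in> carrier G \<Longrightarrow> z \<in> carrier G \<Longrightarrow>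
   commutator G (x \<otimes> y) z = inv y \<otimes> commutator G x z \<otimes> y \<otimes> commutator G y z"
  by (simp add: commutator_def inv_mult_group m_assoc)

lemma comm_pow_left:
  assumes c: "c \<in> carrier G" and k: "k \<in> carrier G"
    and cc: "commutator G c k \<otimes> c = c \<otimes> commutator G c k"
  shows "commutator G (c [^] (n::nat)) k = (commutator G c k) [^] n"
proof (induction n)
  case 0 then show ?case using k by (simp add: commutator_def)
next
  case (Suc n)
  have cm: "(commutator G c k) [^] n \<otimes> c = c \<otimes> (commutator G c k) [^] n"
    using group_commutes_pow[OF cc] c k by simp
  have "commutator G (c [^] Suc n) k = inv c \<otimes> (commutator G c k) [^] n \<otimes> c \<otimes> commutator G c k"
    using comm_mult_left[of "c [^] n" c k] c k Suc by simp
  also have "inv c \<otimes> (commutator G c k) [^] n \<otimes> c = (commutator G c k) [^] n"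
    using cm c k by (simp add: m_assoc)
  finally show ?case by simp
qed

lemma conj_pow:
  assumes a: "a \<in> carrier G" and b: "b \<in> carrier G"
  shows "(inv a \<otimes> b \<otimes> a) [^] (n::nat) = inv a \<otimes> b [^] n \<otimes> a"
proof (induction n)
  case 0 then show ?case using a by simp
next
  case (Suc n)
  have "(inv a \<otimes> b \<otimes> a) [^] Suc n = inv a \<otimes> b [^] n \<otimes> a \<otimes> (inv a \<otimes> b \<otimes> a)"
    using Suc by simp
  also have "\<dots> = inv a \<otimes> (b [^] n \<otimes> b) \<otimes> a"
    using a b by (simp add: m_assoc)
  finally show ?case by simp
qed

lemma pow_comm_shift:
  assumes a: "a \<in> carrier G" and c: "c \<in> carrier G" and d: "d \<in> carrier G"
    and h: "c \<otimes> a = a \<otimes> c \<otimes> d" and da: "d \<otimes> a = a \<otimes> d" and dc: "d \<otimes> c = c \<otimes> d"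
  shows "c [^] (n::nat) \<otimes> a = a \<otimes> c [^] n \<otimes> d [^] n"
proof (induction n)
  case 0 then show ?case using a by simp
next
  case (Suc n)
  have dnc: "d [^] n \<otimes> c = c \<otimes> d [^] n" using group_commutes_pow[OF dc d c] .
  have "c [^] Suc n \<otimes> a = c [^] n \<otimes> (c \<otimes> a)" using a c by (simp add: m_assoc)
  also have "\<dots> = c [^] n \<otimes> a \<otimes> c \<otimes> d" using h a c d by (simp add: m_assoc)
  also have "\<dots> = a \<otimes> c [^] n \<otimes> (d [^] n \<otimes> c) \<otimes> d" using Suc a c d by (simp add: m_assoc)
  also have "\<dots> = a \<otimes> c [^] n \<otimes> c \<otimes> (d [^] n \<otimes> d)" using dnc a c d by (simp add: m_assoc)
  finally show ?case using a c d by (simp add: m_assoc)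
qed

lemma pow_prod_class3:
  assumes a: "a \<in> carrier G" and c: "c \<in> carrier G" and d: "d \<in> carrier G"
    and h: "c \<otimes> a = a \<otimes> c \<otimes> d" and da: "d \<otimes> a = a \<otimes> d" and dc: "d \<otimes> c = c \<otimes> d"
  shows "(a \<otimes> c) [^] (n::nat) = a [^] n \<otimes> c [^] n \<otimes> d [^] (n * (n - 1) div 2)"
proof (induction n)
  case 0 then show ?case by simp
next
  case (Suc n)
  let ?T = "n * (n - 1) div 2"
  have T: "Suc n * (Suc n - 1) div 2 = ?T + n"
    by (cases n) (auto simp: algebra_simps)
  have dTa: "d [^] ?T \<otimes> a = a \<otimes> d [^] ?T" using group_commutes_pow[OF da d a] .
  have dTc: "d [^] ?T \<otimes> c = c \<otimes> d [^] ?T" using group_commutes_pow[OF dc d c] .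
  have dnT: "d [^] n \<otimes> d [^] ?T = d [^] ?T \<otimes> d [^] n" using nat_pow_comm d by simp
  have "(a \<otimes> c) [^] Suc n = a [^] n \<otimes> c [^] n \<otimes> d [^] ?T \<otimes> (a \<otimes> c)" using Suc by simp
  also have "\<dots> = a [^] n \<otimes> (c [^] n \<otimes> (d [^] ?T \<otimes> a)) \<otimes> c" using a c d by (simp add: m_assoc)
  also have "\<dots> = a [^] n \<otimes> (c [^] n \<otimes> a) \<otimes> (d [^] ?T \<otimes> c)" using dTa a c d by (simp add: m_assoc)
  also have "\<dots> = a [^] n \<otimes> (a \<otimes> c [^] n \<otimes> d [^] n) \<otimes> (c \<otimes> d [^] ?T)"
    using dTc pow_comm_shift[OF a c d h da dc, of n] by simp
  also have "\<dots> = (a [^] n \<otimes> a) \<otimes> c [^] n \<otimes> (d [^] n \<otimes> c) \<otimes> d [^] ?T" using a c d by (simp add: m_assoc)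
  also have "\<dots> = (a [^] n \<otimes> a) \<otimes> (c [^] n \<otimes> c) \<otimes> (d [^] ?T \<otimes> d [^] n)"
    using group_commutes_pow[OF dc d c, of n] dnT a c d by (simp add: m_assoc)
  also have "\<dots> = a [^] Suc n \<otimes> c [^] Suc n \<otimes> d [^] (?T + n)"
    using d by (simp add: nat_pow_mult)
  finally show ?case using T by simp
qed


lemma center_carrier: "a \<in> center G \<Longrightarrow> a \<in> carrier G"
  by (simp add: center_def)

lemma center_comm: "a \<in> center G \<Longrightarrow> g \<in> carrier G \<Longrightarrow> a \<otimes> g = g \<otimes> a"
  by (simp add: center_def)

lemma center_inv: assumes a: "a \<in> center G" shows "inv a \<in> center G"
proof -
  have ac: "a \<in> carrier G" using a by (simp add: center_def)
  have "inv a \<otimes> g = g \<otimes> inv a" if g: "g \<in> carrier G" for g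
  proof -
    have "inv a \<otimes> g = inv a \<otimes> (g \<otimes> a) \<otimes> inv a"
      using ac g by (simp add: m_assoc)
    also have "\<dots> = inv a \<otimes> (a \<otimes> g) \<otimes> inv a" using center_comm[OF a g] by simp
    also have "\<dots> = g \<otimes> inv a" using ac g by simp
    finally show ?thesis .
  qed
  then show ?thesis using ac by (simp add: center_def)
qed

lemma center_mult: assumes a: "a \<in> center G" and b: "b \<in> center G" shows "a \<otimes> b \<in> center G"
proof -
  have ac: "a \<in> carrier G" "b \<in> carrier G" using a b by (auto simp: center_def)
  have "a \<otimes> b \<otimes> g = g \<otimes> (a \<otimes> b)" if g: "g \<in> carrier G" for g
  proof -
    have "a \<otimes> b \<otimes> g = a \<otimes> (b \<otimes> g)" using ac g by (simp add: m_assoc)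
    also have "\<dots> = a \<otimes> (g \<otimes> b)" using center_comm[OF b g] by simp
    also have "\<dots> = (a \<otimes> g) \<otimes> b" using ac g by (simp add: m_assoc)
    also have "\<dots> = (g \<otimes> a) \<otimes> b" using center_comm[OF a g] by simp
    also have "\<dots> = g \<otimes> (a \<otimes> b)" using ac g by (simp add: m_assoc)
    finally show ?thesis .
  qed
  then show ?thesis using ac by (simp add: center_def)
qed

lemma center_normal: "center G \<lhd> G"
proof -
  have sub: "subgroup (center G) G"
  proof (rule subgroupI)
    show "center G \<subseteq> carrier G" by (auto simp: center_def)
    have "\<one> \<in> center G" by (simp add: center_def)
    then show "center G \<noteq> {}" by blast
  qed (auto intro: center_inv center_mult)
  show ?thesis unfolding normal_inv_iff
  proof (intro conjI sub ballI)
    fix x h assume x: "x \<in> carrier G" and h: "h \<in> center G"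
    have hc: "h \<in> carrier G" using h by (simp add: center_def)
    have "x \<otimes> h \<otimes> inv x = h \<otimes> x \<otimes> inv x" using center_comm[OF h x] by simp
    also have "\<dots> = h" using x hc by (simp add: m_assoc)
    finally show "x \<otimes> h \<otimes> inv x \<in> center G" using h by simp
  qed
qed

end

lemma quotient_map:
  assumes K: "group K" and G: "group G" and iso: "(K Mod center K) \<cong> G"
  shows "\<exists>\<phi>. group_hom K G \<phi> \<and> \<phi> ` carrier K = carrier G \<and>
           (\<forall>k\<in>carrier K. \<phi> k = \<one>\<^bsub>G\<^esub> \<longleftrightarrow> k \<in> center K)"
proof -
  interpret K: group K by fact
  interpret N: normal "center K" K using group.center_normal[OF K] .
  obtain h where h: "h \<in> iso (K Mod center K) G" using iso unfolding is_iso_def by blast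
  have hhom: "h \<in> hom (K Mod center K) G" using h by (rule iso_imp_homomorphism)
  have himg: "h ` carrier (K Mod center K) = carrier G" and hinj: "inj_on h (carrier (K Mod center K))"
    using h unfolding iso_iff by auto
  define \<phi> where "\<phi> = h \<circ> (\<lambda>a. center K #>\<^bsub>K\<^esub> a)"
  have hom: "\<phi> \<in> hom K G" unfolding \<phi>_def
    using hom_compose[OF N.r_coset_hom_Mod hhom] .
  have gh: "group_hom K G \<phi>" unfolding group_hom_def group_hom_axioms_def using hom G K.group_axioms by blast
  have "\<phi> ` carrier K = h ` ((\<lambda>a. center K #>\<^bsub>K\<^esub> a) ` carrier K)"
    unfolding \<phi>_def by (rule image_comp[symmetric])
  also have "\<dots> = carrier G" using himg unfolding carrier_FactGroup .
  finally have surj: "\<phi> ` carrier K = carrier G" .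
  have FG: "group (K Mod center K)" using N.factorgroup_is_group .
  have hh: "group_hom (K Mod center K) G h" unfolding group_hom_def group_hom_axioms_def
    using hhom FG G by blast
  have ker: "\<phi> k = \<one>\<^bsub>G\<^esub> \<longleftrightarrow> k \<in> center K" if k: "k \<in> carrier K" for k
  proof
    have mem: "center K #>\<^bsub>K\<^esub> k \<in> carrier (K Mod center K)"
      using k unfolding carrier_FactGroup by (rule imageI)
    have one: "\<one>\<^bsub>K Mod center K\<^esub> \<in> carrier (K Mod center K)"
      using monoid.one_closed[OF group.is_monoid[OF FG]] .
    assume "\<phi> k = \<one>\<^bsub>G\<^esub>"
    then have "h (center K #>\<^bsub>K\<^esub> k) = h \<one>\<^bsub>K Mod center K\<^esub>"
      using group_hom.hom_one[OF hh] unfolding \<phi>_def comp_def by simp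
    then have "center K #>\<^bsub>K\<^esub> k = \<one>\<^bsub>K Mod center K\<^esub>"
      using inj_onD[OF hinj _ mem one] by blast
    then have "center K #>\<^bsub>K\<^esub> k = center K" by simp
    then show "k \<in> center K" using K.coset_join1[OF _ k N.subgroup_axioms] by blast
  next
    assume "k \<in> center K"
    then have "center K #>\<^bsub>K\<^esub> k = center K" using N.rcos_const[OF K] by blast
    then show "\<phi> k = \<one>\<^bsub>G\<^esub>"
      using group_hom.hom_one[OF hh] unfolding \<phi>_def comp_def by simp
  qed
  show ?thesis using gh surj ker by blast
qed

context group begin

lemma central_comm_one: "u \<in> center G \<Longrightarrow> v \<in> carrier G \<Longrightarrow> commutator G u v = \<one>"
  using comm_one_iff[of u v] center_comm[of u v] center_carrier by blast

lemma key_K: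
  assumes a: "a \<in> carrier G" and b: "b \<in> carrier G" and hpos: "0 < (h::nat)" and e: "e = 2 * (h::nat)"
    and c_def: "c = commutator G a b"
    and cZ2: "\<And>k. k \<in> carrier G \<Longrightarrow> commutator G c k \<in> center G"
    and cbZ2: "\<And>k. k \<in> carrier G \<Longrightarrow> commutator G (inv c) k \<in> center G"
    and ch: "c [^] h \<in> center G" and be: "b [^] e \<in> center G"
  shows "a [^] e \<otimes> b = b \<otimes> a [^] e"
proof -
  have c: "c \<in> carrier G" using a b c_def by simp
  define cb where "cb = inv c"
  have cb: "cb \<in> carrier G" using c cb_def by simp
  have T: "e * (e - 1) div 2 = h * (e - 1)" using e by simp
  define d2 where "d2 = commutator G cb b"
  have d2Z: "d2 \<in> center G" using cbZ2[OF b] cb_def d2_def by simp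
  have d2: "d2 \<in> carrier G" using d2Z center_carrier by blast
  have sw2: "cb \<otimes> b = b \<otimes> cb \<otimes> d2" using comm_swap[OF cb b] d2_def by simp
  have p2: "(b \<otimes> cb) [^] e = b [^] e \<otimes> cb [^] e \<otimes> d2 [^] (e * (e - 1) div 2)"
    using pow_prod_class3[OF b cb d2 sw2 center_comm[OF d2Z b] center_comm[OF d2Z cb]] .
  have "d2 [^] h = commutator G (cb [^] h) b"
    using comm_pow_left[OF cb b, of h] center_comm[OF d2Z cb] d2_def by simp
  also have "\<dots> = \<one>"
  proof -
    have "cb [^] h = inv (c [^] h)" using nat_pow_inv[OF c] cb_def by simp
    then have "cb [^] h \<in> center G" using center_inv[OF ch] by simp
    then show ?thesis using central_comm_one b by blast
  qed
  finally have d2h: "d2 [^] h = \<one>" .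
  have d2T: "d2 [^] (e * (e - 1) div 2) = \<one>"
    using T nat_pow_pow[OF d2, of h "e - 1"] d2h by simp
  have bcb: "b \<otimes> cb = inv a \<otimes> b \<otimes> a"
  proof -
    have "cb = commutator G b a" using comm_inv[OF a b] c_def cb_def by simp
    then show ?thesis using a b by (simp add: commutator_def m_assoc)
  qed
  have "(b \<otimes> cb) [^] e = inv a \<otimes> b [^] e \<otimes> a" using conj_pow[OF a b] bcb by simp
  also have "\<dots> = b [^] e"
    using center_comm[OF be a] a b by (simp add: m_assoc)
  finally have "b [^] e = b [^] e \<otimes> cb [^] e" using p2 d2T b cb by simp
  then have "cb [^] e = \<one>" using b cb by simp
  then have ce: "c [^] e = \<one>" using nat_pow_inv[OF c, of e] cb_def c by simp
  define d where "d = commutator G c a"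
  have dZ: "d \<in> center G" using cZ2[OF a] d_def by simp
  have d: "d \<in> carrier G" using dZ center_carrier by blast
  have sw: "c \<otimes> a = a \<otimes> c \<otimes> d" using comm_swap[OF c a] d_def by simp
  have p: "(a \<otimes> c) [^] e = a [^] e \<otimes> c [^] e \<otimes> d [^] (e * (e - 1) div 2)"
    using pow_prod_class3[OF a c d sw center_comm[OF dZ a] center_comm[OF dZ c]] .
  have "d [^] h = commutator G (c [^] h) a"
    using comm_pow_left[OF c a, of h] center_comm[OF dZ c] d_def by simp
  also have "\<dots> = \<one>" using central_comm_one[OF ch a] .
  finally have dh: "d [^] h = \<one>" .
  have dT: "d [^] (e * (e - 1) div 2) = \<one>"
    using T nat_pow_pow[OF d, of h "e - 1"] dh by simp
  have ac: "a \<otimes> c = inv b \<otimes> a \<otimes> b" using a b c_def by (simp add: commutator_def m_assoc)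
  have "inv b \<otimes> a [^] e \<otimes> b = a [^] e"
    using conj_pow[OF b a, of e] ac[symmetric] p ce dT a c d by simp
  then have "b \<otimes> (inv b \<otimes> a [^] e \<otimes> b) = b \<otimes> a [^] e" by simp
  then show ?thesis using a b by (simp add: m_assoc)
qed

end

lemma (in group_hom) hom_commutator:
  "u \<in> carrier G \<Longrightarrow> v \<in> carrier G \<Longrightarrow> h (commutator G u v) = commutator H (h u) (h v)"
  by (simp add: commutator_def)

context group begin

lemma centralizer_subgroup:
  assumes w: "w \<in> carrier G" shows "subgroup {k \<in> carrier G. w \<otimes> k = k \<otimes> w} G"
proof (rule subgroupI)
  show "{k \<in> carrier G. w \<otimes> k = k \<otimes> w} \<subseteq> carrier G" by auto
  show "{k \<in> carrier G. w \<otimes> k = k \<otimes> w} \<noteq> {}" using w by auto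
next
  fix k assume "k \<in> {k \<in> carrier G. w \<otimes> k = k \<otimes> w}"
  then have k: "k \<in> carrier G" and wk: "w \<otimes> k = k \<otimes> w" by auto
  have "w \<otimes> inv k = inv k \<otimes> (k \<otimes> w) \<otimes> inv k" using w k by (simp add: m_assoc)
  also have "\<dots> = inv k \<otimes> (w \<otimes> k) \<otimes> inv k" using wk by simp
  also have "\<dots> = inv k \<otimes> w" using w k by (simp add: m_assoc)
  finally show "inv k \<in> {k \<in> carrier G. w \<otimes> k = k \<otimes> w}" using k by simp
next
  fix k l assume "k \<in> {k \<in> carrier G. w \<otimes> k = k \<otimes> w}" "l \<in> {k \<in> carrier G. w \<otimes> k = k \<otimes> w}"
  then have k: "k \<in> carrier G" and wk: "w \<otimes> k = k \<otimes> w" and l: "l \<in> carrier G" and wl: "w \<otimes> l = l \<otimes> w" by auto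
  have "w \<otimes> (k \<otimes> l) = (w \<otimes> k) \<otimes> l" using w k l by (simp add: m_assoc)
  also have "\<dots> = k \<otimes> (w \<otimes> l)" using wk w k l by (simp add: m_assoc)
  also have "\<dots> = k \<otimes> (l \<otimes> w)" using wl by simp
  finally show "k \<otimes> l \<in> {k \<in> carrier G. w \<otimes> k = k \<otimes> w}" using k l w by (simp add: m_assoc)
qed

lemma comm_central_mult:
  assumes w: "w \<in> carrier G" and k: "k \<in> carrier G" and z: "z \<in> center G" and wk: "w \<otimes> k = k \<otimes> w"
  shows "w \<otimes> (k \<otimes> z) = (k \<otimes> z) \<otimes> w"
proof -
  have zc: "z \<in> carrier G" using z center_carrier by blast
  have "w \<otimes> (k \<otimes> z) = (w \<otimes> k) \<otimes> z" using w k zc by (simp add: m_assoc)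
  also have "\<dots> = k \<otimes> (w \<otimes> z)" using wk w k zc by (simp add: m_assoc)
  also have "\<dots> = k \<otimes> (z \<otimes> w)" using center_comm[OF z w] by simp
  finally show ?thesis using w k zc by (simp add: m_assoc)
qed

lemma ord_two_pow_drop:
  assumes g: "g \<in> carrier G" and k: "k \<ge> 1" and ge: "g [^] ((2::nat) ^ k) = \<one>" and ne: "ord g \<noteq> 2 ^ k"
  shows "g [^] ((2::nat) ^ (k - 1)) = \<one>"
proof -
  have "ord g dvd 2 ^ k" using pow_eq_id[OF g] ge by simp
  then obtain i where i: "i \<le> k" "ord g = 2 ^ i" using divides_primepow_nat[of 2] by auto
  then have "i \<le> k - 1" using ne by (cases "i = k") auto
  then have "ord g dvd 2 ^ (k - 1)" using i by (simp add: le_imp_power_dvd)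
  then show ?thesis using pow_eq_id[OF g] by simp
qed

end

theorem theorem2p3:
  fixes G :: "('a, 'b) monoid_scheme" and x :: "nat \<Rightarrow> 'a" and r :: "nat \<Rightarrow> nat" and m :: nat
  assumes "group G"
    and "nilpotent_class_two G"
    and "\<forall>i \<in> {1..m}. x i \<in> carrier G"
    and "generate G (x ` {1..m}) = carrier G"
    and "\<forall>j \<in> {1..m}. generate G (x ` ({1..m} - {j})) \<noteq> carrier G"
    and "\<forall>i \<in> {1..m}. group.ord G (x i) = 2 ^ r i"
    and "1 < (2::nat) ^ r 1"
    and "\<forall>i j. 1 \<le> i \<and> i \<le> j \<and> j \<le> m \<longrightarrow> (2::nat) ^ r i \<le> 2 ^ r j"
    and "m > 1"
    and "r m = r (m - 1) + 1"
    and "\<exists>K :: 'c monoid. capable_witness K G"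
  shows "\<exists>i \<in> {1..m - 1}. group.ord G (commutator G (x m) (x i)) = 2 ^ r (m - 1)"
proof (rule ccontr)
  assume neg: "\<not> ?thesis"
  interpret G: group G by fact
  have xc: "\<And>i. i \<in> {1..m} \<Longrightarrow> x i \<in> carrier G" using assms(3) by blast
  have Gcent: "commutator G u v \<in> center G" if u: "u \<in> carrier G" and v: "v \<in> carrier G" for u v
  proof -
    have "commutator G u v = inv\<^bsub>G\<^esub> u \<otimes>\<^bsub>G\<^esub> inv\<^bsub>G\<^esub> v \<otimes>\<^bsub>G\<^esub> inv\<^bsub>G\<^esub> (inv\<^bsub>G\<^esub> u) \<otimes>\<^bsub>G\<^esub> inv\<^bsub>G\<^esub> (inv\<^bsub>G\<^esub> v)"
      using u v by (simp add: commutator_def)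
    then have "commutator G u v \<in> derived_set G (carrier G)" using u v by blast
    then have "commutator G u v \<in> derived G (carrier G)" unfolding derived_def by (rule generate.incl)
    then show ?thesis using assms(2) unfolding nilpotent_class_two_def by blast
  qed
  define k where "k = r (m - 1)"
  define e where "e = (2::nat) ^ k"
  define h where "h = (2::nat) ^ (k - 1)"
  have m1: "m - 1 \<in> {1..m}" "1 \<le> m - 1" using assms(9) by auto
  have r1: "r 1 \<ge> 1" using assms(7) by (cases "r 1") auto
  have "(2::nat) ^ r 1 \<le> 2 ^ k" using assms(8) m1 k_def by auto
  then have "r 1 \<le> k" by simp
  then have k1: "k \<ge> 1" using r1 by simp
  have eh: "e = 2 * h" unfolding e_def h_def using k1 by (cases k) auto
  have hpos: "0 < h" unfolding h_def by simp
  have xie: "x i [^]\<^bsub>G\<^esub> e = \<one>\<^bsub>G\<^esub>" if i: "i \<in> {1..m-1}" for i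
  proof -
    have i': "i \<in> {1..m}" using i by auto
    have "(2::nat) ^ r i \<le> 2 ^ k" using assms(8) i k_def by auto
    then have "r i \<le> k" by simp
    then have "group.ord G (x i) dvd e" using assms(6) i' e_def by (simp add: le_imp_power_dvd)
    then show ?thesis using G.pow_eq_id[OF xc[OF i']] by simp
  qed
  have mm: "m \<in> {1..m}" using assms(9) by auto
  have xme: "x m [^]\<^bsub>G\<^esub> e \<noteq> \<one>\<^bsub>G\<^esub>"
  proof
    assume "x m [^]\<^bsub>G\<^esub> e = \<one>\<^bsub>G\<^esub>"
    then have "(2::nat) ^ (k + 1) dvd 2 ^ k" using G.pow_eq_id[OF xc[OF mm]] assms(6) assms(10) mm e_def k_def by simp
    then show False using dvd_power_iff_le[of 2 "k+1" k] by simp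
  qed
  have commh: "(commutator G (x m) (x i)) [^]\<^bsub>G\<^esub> h = \<one>\<^bsub>G\<^esub>" if i: "i \<in> {1..m-1}" for i
  proof -
    have i': "i \<in> {1..m}" using i by auto
    have xi: "x i \<in> carrier G" and xm: "x m \<in> carrier G" using xc i' mm by auto
    have "commutator G (x i) (x m) [^]\<^bsub>G\<^esub> e = commutator G (x i [^]\<^bsub>G\<^esub> e) (x m)"
      using G.comm_pow_left[OF xi xm, of e] G.center_comm[OF Gcent[OF xi xm] xi] by simp
    also have "\<dots> = \<one>\<^bsub>G\<^esub>" using xie[OF i] xm by (simp add: commutator_def)
    finally have "commutator G (x i) (x m) [^]\<^bsub>G\<^esub> e = \<one>\<^bsub>G\<^esub>" .
    then have ce: "commutator G (x m) (x i) [^]\<^bsub>G\<^esub> e = \<one>\<^bsub>G\<^esub>"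
      using G.comm_inv[OF xi xm] G.nat_pow_inv[OF G.comm_closed[OF xi xm], of e] by simp
    have "group.ord G (commutator G (x m) (x i)) \<noteq> 2 ^ k" using neg i k_def by auto
    then show ?thesis using G.ord_two_pow_drop[OF G.comm_closed[OF xm xi] k1] ce e_def h_def by simp
  qed
  obtain K :: "'c monoid" where Kw: "capable_witness K G" using assms(11) by blast
  have Kg: "group K" and iso: "(K Mod center K) \<cong> G" using Kw unfolding capable_witness_def by auto
  interpret K: group K by fact
  obtain \<phi> where gh: "group_hom K G \<phi>" and surj: "\<phi> ` carrier K = carrier G"
    and ker0: "\<forall>k\<in>carrier K. \<phi> k = \<one>\<^bsub>G\<^esub> \<longleftrightarrow> k \<in> center K"
    using quotient_map[OF Kg assms(1) iso] by (elim exE conjE)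
  have ker: "\<And>k. k \<in> carrier K \<Longrightarrow> \<phi> k = \<one>\<^bsub>G\<^esub> \<longleftrightarrow> k \<in> center K"
    using ker0 by (rule bspec)
  interpret \<phi>: group_hom K G \<phi> by fact
  define y where "y i = (SOME k. k \<in> carrier K \<and> \<phi> k = x i)" for i
  have y: "y i \<in> carrier K \<and> \<phi> (y i) = x i" if i: "i \<in> {1..m}" for i
  proof -
    have "x i \<in> \<phi> ` carrier K" unfolding surj by (rule xc[OF i])
    then obtain k where "k \<in> carrier K" "\<phi> k = x i" by (metis imageE)
    then have "\<exists>k. k \<in> carrier K \<and> \<phi> k = x i" by (intro exI conjI)
    then show ?thesis unfolding y_def by (rule someI_ex)
  qed
  define a where "a = y m"
  have a: "a \<in> carrier K" "\<phi> a = x m" using y[OF mm] unfolding a_def by (rule conjunct1, rule conjunct2)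
  have Z2: "commutator K u v \<in> center K" if u: "u \<in> carrier K" "\<phi> u \<in> center G" and v: "v \<in> carrier K" for u v
  proof -
    have "\<phi> (commutator K u v) = commutator G (\<phi> u) (\<phi> v)" using \<phi>.hom_commutator u v by simp
    also have "\<dots> = \<one>\<^bsub>G\<^esub>" using G.central_comm_one u v by simp
    finally show ?thesis using ker u v by simp
  qed
  have acomm: "a [^]\<^bsub>K\<^esub> e \<otimes>\<^bsub>K\<^esub> y i = y i \<otimes>\<^bsub>K\<^esub> a [^]\<^bsub>K\<^esub> e" if i: "i \<in> {1..m}" for i
  proof (cases "i = m")
    case True
    then show ?thesis using a K.group_commutes_pow[of a a e] a_def by simp
  next
    case False
    then have i1: "i \<in> {1..m-1}" using i by auto
    have b: "y i \<in> carrier K" "\<phi> (y i) = x i" using y[OF i] by (rule conjunct1, rule conjunct2)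
    define c where "c = commutator K a (y i)"
    have cc: "c \<in> carrier K" using a b c_def by simp
    have phic: "\<phi> c = commutator G (x m) (x i)" using \<phi>.hom_commutator a b c_def by simp
    have phicZ: "\<phi> c \<in> center G" using phic Gcent xc i mm by simp
    show ?thesis
    proof (rule K.key_K[OF a(1) b(1) hpos eh c_def])
      show "commutator K c k \<in> center K" if "k \<in> carrier K" for k
        using Z2[OF cc phicZ that] .
      have "\<phi> (inv\<^bsub>K\<^esub> c) \<in> center G" using G.center_inv[OF phicZ] cc by simp
      then show "commutator K (inv\<^bsub>K\<^esub> c) k \<in> center K" if "k \<in> carrier K" for k
        using Z2[OF _ _ that] cc by simp
      have "\<phi> (c [^]\<^bsub>K\<^esub> h) = \<one>\<^bsub>G\<^esub>" using \<phi>.hom_nat_pow[OF cc] phic commh[OF i1] by simp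
      then show "c [^]\<^bsub>K\<^esub> h \<in> center K" using ker cc by simp
      have "\<phi> (y i [^]\<^bsub>K\<^esub> e) = \<one>\<^bsub>G\<^esub>" using \<phi>.hom_nat_pow b xie[OF i1] by simp
      then show "y i [^]\<^bsub>K\<^esub> e \<in> center K" using ker b by simp
    qed
  qed
  define C where "C = {k \<in> carrier K. a [^]\<^bsub>K\<^esub> e \<otimes>\<^bsub>K\<^esub> k = k \<otimes>\<^bsub>K\<^esub> a [^]\<^bsub>K\<^esub> e}"
  have Csub: "subgroup C K" unfolding C_def using K.centralizer_subgroup a by simp
  have imgsub: "subgroup (\<phi> ` C) G" using \<phi>.subgroup_img_is_subgroup[OF Csub] .
  have "x ` {1..m} \<subseteq> \<phi> ` C"
  proof
    fix g assume "g \<in> x ` {1..m}"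
    then obtain i where i: "i \<in> {1..m}" "g = x i" by (metis imageE)
    then have "y i \<in> C" using y[OF i(1)] acomm[OF i(1)] C_def by simp
    then have "\<phi> (y i) \<in> \<phi> ` C" by (rule imageI)
    then show "g \<in> \<phi> ` C" using y[OF i(1)] i(2) by simp
  qed
  then have "generate G (x ` {1..m}) \<subseteq> \<phi> ` C" by (rule G.generate_subgroup_incl[OF _ imgsub])
  then have "carrier G \<subseteq> \<phi> ` C" unfolding assms(4) .
  have central: "a [^]\<^bsub>K\<^esub> e \<otimes>\<^bsub>K\<^esub> k = k \<otimes>\<^bsub>K\<^esub> a [^]\<^bsub>K\<^esub> e" if k: "k \<in> carrier K" for k
  proof -
    have "\<phi> k \<in> \<phi> ` C" using \<open>carrier G \<subseteq> \<phi> ` C\<close> \<phi>.hom_closed[OF k] by (rule subsetD)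
    then obtain k' where k': "k' \<in> C" "\<phi> k' = \<phi> k" by (metis imageE)
    have k'c: "k' \<in> carrier K" using k' C_def by simp
    define z where "z = inv\<^bsub>K\<^esub> k' \<otimes>\<^bsub>K\<^esub> k"
    have "\<phi> z = \<one>\<^bsub>G\<^esub>" using k'c k k' z_def by simp
    moreover have "z \<in> carrier K" using k'c k z_def by simp
    ultimately have zZ: "z \<in> center K" using ker by blast
    have kk: "k = k' \<otimes>\<^bsub>K\<^esub> z" using z_def k k'c by simp
    show ?thesis using K.comm_central_mult[OF _ k'c zZ] k' C_def kk a by simp
  qed
  then have "a [^]\<^bsub>K\<^esub> e \<in> center K" using a by (simp add: center_def)
  then have "\<phi> (a [^]\<^bsub>K\<^esub> e) = \<one>\<^bsub>G\<^esub>" using ker a by simp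
  then show False using xme \<phi>.hom_nat_pow a by simp
qed

end
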